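(* Let $f:\mathbb{R}^d\to\mathbb{R}$ and $P:\mathbb{R}^d\to\mathbb{R}^s$ be continuously differentiable, $D\subseteq\mathbb{R}^s$ closed, $\Omega=\{z\mid P(z)\in D\}$. Assume that $\bar z\in\Omega$ is a sharp minimum for the problem $\min f(z)$ s.t. $P(z)\in D$, that GGCQ holds at $\bar z$, and that the mapping $u\rightrightarrows\nabla P(\bar z)u-T_D(P(\bar z))$ is metrically subregular at $(0,0)$. Then there exist $w\in T_D(P(\bar z))$ and a multiplier $w^\ast\in\widehat N_{T_D(P(\bar z))}(w)$ such that $\nabla f(\bar z)+\nabla P(\bar z)^\ast w^\ast=0$.
   Context: Tangent cone $T_\Omega(\bar z)=\{w\mid \exists t_k\downarrow0,\ w_k\to w,\ \bar z+t_kw_k\in\Omega\}$; polar cone $K^\ast=\{z^\ast\mid\langle z^\ast,w\rangle\le0\ \forall w\in K\}$; regular normal cone $\widehat N_\Omega(\bar z)=(T_\Omega(\bar z))^\ast$. Linearized tangent cone $T^{\rm lin}_{P,D}(\bar z)=\{u\mid\nabla P(\bar z)u\in T_D(P(\bar z))\}$. GGCQ holds at $\bar z$ if $\widehat N_\Omega(\bar z)=(T^{\rm lin}_{P,D}(\bar z))^\ast$. A point $\bar z\in\Omega$ is a sharp minimum if there is $\alpha>0$ with $f(z)\ge f(\bar z)+\alpha\|z-\bar z\|$ for all $z\in\Omega$ near $\bar z$. A mapping $M$ is metrically subregular at $(\bar z,\bar w)\in\operatorname{gph}M$ if there are a neighborhood $W$ of $\bar z$ and $\kappa>0$ with $\operatorname{dist}(z,M^{-1}(\bar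 w))\le\kappa\operatorname{dist}(\bar w,M(z))$ for $z\in W$. *)

theory Defs
  imports "HOL-Analysis.Analysis"
begin

definition tangent_cone :: "'a::real_normed_vector set \<Rightarrow> 'a \<Rightarrow> 'a set" where
  "tangent_cone \<Omega> zb = {w. \<exists>(t::nat \<Rightarrow> real) (wk::nat \<Rightarrow> 'a).
      (\<forall>k. t k > 0) \<and> t \<longlonglongrightarrow> 0 \<and> wk \<longlonglongrightarrow> w \<and> (\<forall>k. zb + t k *\<^sub>R wk k \<in> \<Omega>)}"

definition polar_cone :: "'a::real_inner set \<Rightarrow> 'a set" where
  "polar_cone K = {zs. \<forall>w\<in>K. inner zs w \<le> 0}"

definition regular_normal_cone :: "'a::real_inner set \<Rightarrow> 'a \<Rightarrow> 'a set" where
  "regular_normal_cone \<Omega> zb = polar_cone (tangent_cone \<Omega> zb)"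

definition lin_tangent_cone :: "real^'d^'s \<Rightarrow> (real^'s) set \<Rightarrow> real^'s \<Rightarrow> (real^'d) set" where
  "lin_tangent_cone JPzb D Pzb = {u. JPzb *v u \<in> tangent_cone D Pzb}"

definition GGCQ :: "(real^'d) set \<Rightarrow> real^'d^'s \<Rightarrow> (real^'s) set \<Rightarrow> real^'d \<Rightarrow> real^'s \<Rightarrow> bool" where
  "GGCQ \<Omega> JPzb D zb Pzb \<longleftrightarrow> regular_normal_cone \<Omega> zb = polar_cone (lin_tangent_cone JPzb D Pzb)"

definition sharp_minimum :: "('a::real_normed_vector \<Rightarrow> real) \<Rightarrow> 'a set \<Rightarrow> 'a \<Rightarrow> bool" where
  "sharp_minimum f \<Omega> zb \<longleftrightarrow> zb \<in> \<Omega> \<and>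
     (\<exists>\<alpha>>0. \<exists>\<epsilon>>0. \<forall>z\<in>\<Omega> \<inter> ball zb \<epsilon>. f z \<ge> f zb + \<alpha> * norm (z - zb))"

text \<open>Distance to the empty set is +\<infinity> by convention, so the inequality is only
  required when M z is nonempty (infdist to {} is 0 in Isabelle).\<close>
definition metrically_subregular ::
  "('a::metric_space \<Rightarrow> 'b::metric_space set) \<Rightarrow> 'a \<Rightarrow> 'b \<Rightarrow> bool" where
  "metrically_subregular M zb wb \<longleftrightarrow> wb \<in> M zb \<and>
     (\<exists>W \<kappa>. open W \<and> zb \<in> W \<and> \<kappa> > 0 \<and>
        (\<forall>z\<in>W. M z \<noteq> {} \<longrightarrow> infdist z {x. wb \<in> M x} \<le> \<kappa> * infdist wb (M z)))"

end

theory Submission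
  imports Defs
begin

lemma zero_in_tangent: "x \<in> S \<Longrightarrow> 0 \<in> tangent_cone S x"
  unfolding tangent_cone_def
  apply (rule CollectI)
  apply (rule exI[where x="\<lambda>k. inverse (real (Suc k))"])
  apply (rule exI[where x="\<lambda>k. 0"])
  using LIMSEQ_inverse_real_of_nat by auto

lemma tangent_cone_closed: "closed (tangent_cone S x)"
proof (rule closed_sequential_limits[THEN iffD2], intro allI impI, elim conjE)
  fix ws w assume ws: "\<forall>n. ws n \<in> tangent_cone S x" and lim: "ws \<longlonglongrightarrow> w"
  have "\<forall>n. \<exists>t wk. t > 0 \<and> t < 1 / (real n + 1) \<and> norm (wk - ws n) < 1 / (real n + 1) \<and> x + t *\<^sub>R wk \<in> S"
  proof
    fix n
    from ws[rule_format, of n] obtain t wk where t: "\<forall>k. t k > 0" "t \<longlonglongrightarrow> 0" "wk \<longlonglongrightarrow> ws n"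
      "\<forall>k. x + t k *\<^sub>R wk k \<in> S" unfolding tangent_cone_def by blast
    have e: "1 / (real n + 1) > 0" by simp
    have "eventually (\<lambda>k. dist (t k) 0 < 1 / (real n + 1)) sequentially"
      using t(2) e tendstoD by blast
    moreover have "eventually (\<lambda>k. dist (wk k) (ws n) < 1 / (real n + 1)) sequentially"
      using t(3) e tendstoD by blast
    ultimately obtain k where "dist (t k) 0 < 1 / (real n + 1)" "dist (wk k) (ws n) < 1 / (real n + 1)"
      using eventually_happens'[OF sequentially_bot] eventually_conj by (metis (mono_tags, lifting))
    then show "\<exists>t wk. t > 0 \<and> t < 1 / (real n + 1) \<and> norm (wk - ws n) < 1 / (real n + 1) \<and> x + t *\<^sub>R wk \<in> S"
      using t(1,4) by (intro exI[of _ "t k"] exI[of _ "wk k"]) (auto simp: dist_norm)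
  qed
  then obtain tt ww where tw: "\<And>n. tt n > 0" "\<And>n. tt n < 1 / (real n + 1)"
    "\<And>n. norm (ww n - ws n) < 1 / (real n + 1)" "\<And>n. x + tt n *\<^sub>R ww n \<in> S"
    by metis
  have lim0: "(\<lambda>n. 1 / (real n + 1)) \<longlonglongrightarrow> 0"
    using LIMSEQ_inverse_real_of_nat by (simp add: divide_inverse add.commute)
  have "tt \<longlonglongrightarrow> 0"
    apply (rule tendsto_sandwich[of "\<lambda>_. 0" _ _ "\<lambda>n. 1 / (real n + 1)"])
    using tw lim0 by (auto intro!: always_eventually less_imp_le)
  moreover have "ww \<longlonglongrightarrow> w"
  proof -
    have "(\<lambda>n. ww n - ws n) \<longlonglongrightarrow> 0"
      apply (rule tendsto_norm_zero_cancel)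
      apply (rule tendsto_sandwich[of "\<lambda>_. 0" _ _ "\<lambda>n. 1 / (real n + 1)"])
      using tw lim0 by (auto intro!: always_eventually less_imp_le)
    from tendsto_add[OF this lim] show ?thesis by simp
  qed
  ultimately show "w \<in> tangent_cone S x" unfolding tangent_cone_def using tw by blast
qed

lemma proximal_normal:
  assumes "v0 \<in> T" "\<And>v. v \<in> T \<Longrightarrow> dist y v0 \<le> dist y v"
  shows "y - v0 \<in> polar_cone (tangent_cone T v0)"
  unfolding polar_cone_def
proof (intro CollectI ballI)
  fix h assume "h \<in> tangent_cone T v0"
  then obtain t hk where t: "\<forall>k. t k > 0" "t \<longlonglongrightarrow> 0" "hk \<longlonglongrightarrow> h"
      "\<forall>k. v0 + t k *\<^sub>R hk k \<in> T" unfolding tangent_cone_def by blast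
  have ineq: "0 \<le> - 2 * ((y - v0) \<bullet> hk k) + t k * (hk k \<bullet> hk k)" for k
  proof -
    have "dist y v0 \<le> dist y (v0 + t k *\<^sub>R hk k)" using assms(2) t(4) by blast
    then have "(y - v0) \<bullet> (y - v0) \<le> ((y - v0) - t k *\<^sub>R hk k) \<bullet> ((y - v0) - t k *\<^sub>R hk k)"
      by (simp add: dist_norm norm_le diff_diff_add)
    then have "0 \<le> t k * (- 2 * ((y - v0) \<bullet> hk k) + t k * (hk k \<bullet> hk k))"
      by (simp add: inner_diff_left inner_diff_right algebra_simps inner_commute)
    then show ?thesis using t(1)[rule_format, of k] by (simp add: zero_le_mult_iff)
  qed
  have "(\<lambda>k. - 2 * ((y - v0) \<bullet> hk k) + t k * (hk k \<bullet> hk k)) \<longlonglongrightarrow> - 2 * ((y - v0) \<bullet> h) + 0 * (h \<bullet> h)"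
    by (intro tendsto_intros t)
  then have "0 \<le> - 2 * ((y - v0) \<bullet> h) + 0 * (h \<bullet> h)"
    using ineq by (intro LIMSEQ_le_const) auto
  then show "(y - v0) \<bullet> h \<le> 0" by simp
qed

lemma sharp_tangent:
  assumes fd: "(f has_derivative (\<lambda>u. g \<bullet> u)) (at zb)" and sm: "sharp_minimum f \<Omega> zb"
  obtains \<alpha> where "\<alpha> > 0" "\<And>u. u \<in> tangent_cone \<Omega> zb \<Longrightarrow> g \<bullet> u \<ge> \<alpha> * norm u"
proof -
  from sm obtain \<alpha> \<epsilon> where a: "\<alpha> > 0" "\<epsilon> > 0"
    and mn: "\<And>z. z \<in> \<Omega> \<inter> ball zb \<epsilon> \<Longrightarrow> f z \<ge> f zb + \<alpha> * norm (z - zb)"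
    unfolding sharp_minimum_def by blast
  have "g \<bullet> u \<ge> \<alpha> * norm u" if u: "u \<in> tangent_cone \<Omega> zb" for u
  proof -
    from u obtain t uk where t: "\<forall>k. t k > 0" "t \<longlonglongrightarrow> 0" "uk \<longlonglongrightarrow> u"
      "\<forall>k. zb + t k *\<^sub>R uk k \<in> \<Omega>" unfolding tangent_cone_def by blast
    have key: "\<alpha> * norm u \<le> g \<bullet> u + e * norm u" if e: "e > 0" for e
    proof -
      from fd[unfolded has_derivative_at_alt] e obtain d where d: "d > 0"
        "\<And>y. norm (y - zb) < d \<Longrightarrow> norm (f y - f zb - g \<bullet> (y - zb)) \<le> e * norm (y - zb)"
        by blast
      have "(\<lambda>k. t k *\<^sub>R uk k) \<longlonglongrightarrow> 0 *\<^sub>R u" by (intro tendsto_intros t)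
      then have tl: "(\<lambda>k. t k *\<^sub>R uk k) \<longlonglongrightarrow> 0" by simp
      have mdpos: "min d \<epsilon> > 0" using d(1) a(2) by simp
      have "eventually (\<lambda>k. dist (t k *\<^sub>R uk k) 0 < min d \<epsilon>) sequentially"
        using tendstoD[OF tl mdpos] .
      then have ev: "eventually (\<lambda>k. \<alpha> * norm (uk k) \<le> g \<bullet> uk k + e * norm (uk k)) sequentially"
      proof (rule eventually_mono)
        fix k assume k: "dist (t k *\<^sub>R uk k) 0 < min d \<epsilon>"
        let ?z = "zb + t k *\<^sub>R uk k"
        have tk: "t k > 0" using t(1) by blast
        have "?z \<in> \<Omega> \<inter> ball zb \<epsilon>" using t(4) k by (auto simp: dist_norm)
        then have 1: "f ?z \<ge> f zb + \<alpha> * (t k * norm (uk k))" using mn tk by fastforce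
        have "norm (f ?z - f zb - g \<bullet> (t k *\<^sub>R uk k)) \<le> e * norm (t k *\<^sub>R uk k)"
          using d(2)[of ?z] k by (auto simp: dist_norm)
        then have 2: "f ?z - f zb - t k * (g \<bullet> uk k) \<le> e * (t k * norm (uk k))"
          using tk by (auto simp: abs_le_iff)
        from 1 2 have "t k * (\<alpha> * norm (uk k)) \<le> t k * (g \<bullet> uk k + e * norm (uk k))"
          by (simp add: algebra_simps)
        then show "\<alpha> * norm (uk k) \<le> g \<bullet> uk k + e * norm (uk k)" using tk by simp
      qed
      have l1: "(\<lambda>k. \<alpha> * norm (uk k)) \<longlonglongrightarrow> \<alpha> * norm u" by (intro tendsto_intros t)
      have l2: "(\<lambda>k. g \<bullet> uk k + e * norm (uk k)) \<longlonglongrightarrow> g \<bullet> u + e * norm u" by (intro tendsto_intros t)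
      show ?thesis using LIMSEQ_le[OF l1 l2] ev by (meson eventually_sequentially)
    qed
    show ?thesis
    proof (rule ccontr)
      assume "\<not> ?thesis"
      then have lt: "g \<bullet> u < \<alpha> * norm u" by simp
      then have nu: "norm u > 0" using a(1)
        by (metis mult_zero_right norm_eq_zero norm_ge_zero order_less_le inner_zero_right)
      define e where "e = (\<alpha> * norm u - g \<bullet> u) / (2 * norm u)"
      have "e > 0" using lt nu by (simp add: e_def)
      have X: "e * norm u = (\<alpha> * norm u - g \<bullet> u) / 2" using nu by (simp add: e_def)
      have "\<alpha> * norm u \<le> g \<bullet> u + (\<alpha> * norm u - g \<bullet> u) / 2"
        using key[OF \<open>e > 0\<close>] unfolding X .
      then show False using lt by argo
    qed
  qed
  then show ?thesis using that a(1) by blast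
qed

lemma quad_aux:
  fixes a A c d :: real
  assumes "c > 0" "A * A \<le> c * a"
  shows "a - A * d + c / 2 * d^2 \<ge> a / 2"
proof -
  have "0 \<le> (c * d - A)^2 + (c * a - A * A)" using assms by simp
  also have "\<dots> = 2 * c * (a - A * d + c / 2 * d^2 - a / 2)"
    by (simp add: power2_eq_square algebra_simps)
  finally show ?thesis using assms(1) by (simp add: zero_le_mult_iff)
qed

theorem corollary4p5:
  fixes f :: "real^'d \<Rightarrow> real" and gradf :: "real^'d \<Rightarrow> real^'d"
    and P :: "real^'d \<Rightarrow> real^'s" and JP :: "real^'d \<Rightarrow> real^'d^'s"
    and D :: "(real^'s) set" and zb :: "real^'d"
  assumes f_deriv: "\<And>z. (f has_derivative (\<lambda>u. gradf z \<bullet> u)) (at z)"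
    and f_C1: "continuous_on UNIV gradf"
    and P_deriv: "\<And>z. (P has_derivative (\<lambda>u. JP z *v u)) (at z)"
    and P_C1: "continuous_on UNIV JP"
    and D_closed: "closed D"
    and sharp: "sharp_minimum f {z. P z \<in> D} zb"
    and ggcq: "GGCQ {z. P z \<in> D} (JP zb) D zb (P zb)"
    and subreg: "metrically_subregular
                   (\<lambda>u. {JP zb *v u - v | v. v \<in> tangent_cone D (P zb)}) 0 0"
  shows "\<exists>w ws. w \<in> tangent_cone D (P zb)
           \<and> ws \<in> regular_normal_cone (tangent_cone D (P zb)) w
           \<and> gradf zb + transpose (JP zb) *v ws = 0"
proof -
  define J where "J = JP zb"
  define g where "g = gradf zb"
  define T where "T = tangent_cone D (P zb)"
  define L where "L = {u. J *v u \<in> T}"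
  have Pzb: "P zb \<in> D" using sharp unfolding sharp_minimum_def by simp
  have T0: "0 \<in> T" unfolding T_def using zero_in_tangent[OF Pzb] .
  have Tcl: "closed T" unfolding T_def by (rule tangent_cone_closed)
  have Tne: "T \<noteq> {}" using T0 by blast
  have L0: "0 \<in> L" using T0 by (simp add: L_def)
  have Lcl: "closed L" unfolding L_def
    using continuous_closed_vimage[OF Tcl, of "\<lambda>u. J *v u"]
    by (auto simp: vimage_def intro!: continuous_intros)
  have Lne: "L \<noteq> {}" using L0 by blast
  obtain \<alpha> where a0: "\<alpha> > 0"
    and aT: "\<And>u. u \<in> tangent_cone {z. P z \<in> D} zb \<Longrightarrow> g \<bullet> u \<ge> \<alpha> * norm u"
    using sharp_tangent[OF f_deriv[of zb] sharp] unfolding g_def by blast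
  have aL: "g \<bullet> u \<ge> \<alpha> * norm u" if uL: "u \<in> L" for u
  proof (cases "u = 0")
    case True then show ?thesis by simp
  next
    case False
    then have nu: "norm u > 0" by simp
    define b where "b = (\<alpha> / norm u) *\<^sub>R u"
    have nb: "norm b = \<alpha>" using nu a0 by (simp add: b_def)
    have "- g + b \<in> regular_normal_cone {z. P z \<in> D} zb"
      unfolding regular_normal_cone_def polar_cone_def
    proof (intro CollectI ballI)
      fix w assume w: "w \<in> tangent_cone {z. P z \<in> D} zb"
      have "b \<bullet> w \<le> norm b * norm w" by (rule norm_cauchy_schwarz)
      then show "(- g + b) \<bullet> w \<le> 0" using aT[OF w] nb by (simp add: inner_add_left inner_diff_left)
    qed
    then have "- g + b \<in> polar_cone L"
      using ggcq unfolding GGCQ_def lin_tangent_cone_def L_def J_def T_def by simp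
    then have "(- g + b) \<bullet> u \<le> 0" using uL unfolding polar_cone_def by blast
    moreover have "b \<bullet> u = \<alpha> * norm u" using nu
      by (simp add: b_def power2_norm_eq_inner[symmetric] power2_eq_square)
    ultimately show ?thesis by (simp add: inner_add_left inner_diff_left)
  qed
  from subreg obtain W \<kappa> where W: "open W" "0 \<in> W" "\<kappa> > 0"
    and sr: "\<And>z. z \<in> W \<Longrightarrow> {J *v z - v | v. v \<in> T} \<noteq> {} \<Longrightarrow>
       infdist z {x. 0 \<in> {J *v x - v | v. v \<in> T}} \<le> \<kappa> * infdist 0 {J *v z - v | v. v \<in> T}"
    unfolding metrically_subregular_def J_def T_def by blast
  have invM: "{x. 0 \<in> {J *v x - v | v. v \<in> T}} = L" unfolding L_def by auto
  obtain r where r: "r > 0" "ball 0 r \<subseteq> W" using W openE by blast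
  define \<rho> where "\<rho> = r / 2"
  have rho: "\<rho> > 0" "cball 0 \<rho> \<subseteq> W" using r by (auto simp: \<rho>_def)
  define K where "K = \<alpha> + norm g"
  have K0: "K \<ge> 0" using a0 by (simp add: K_def)
  define d where "d = (\<lambda>u. infdist (J *v u) T)"
  have sphere_est: "g \<bullet> u \<ge> \<alpha> * \<rho> - (K * \<kappa>) * d u" if nu: "norm u = \<rho>" for u
  proof -
    have uW: "u \<in> W" using rho nu by auto
    obtain v where v: "v \<in> T" "infdist (J *v u) T = dist (J *v u) v"
      using infdist_attains_inf[OF Tcl Tne] by metis
    have "J *v u - v \<in> {J *v u - v | v. v \<in> T}" using v by blast
    then have "infdist 0 {J *v u - v | v. v \<in> T} \<le> dist 0 (J *v u - v)" by (rule infdist_le)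
    also have "\<dots> = d u" using v by (simp add: d_def dist_norm norm_minus_commute)
    finally have i1: "infdist 0 {J *v u - v | v. v \<in> T} \<le> d u" .
    have "infdist u L \<le> \<kappa> * infdist 0 {J *v u - v | v. v \<in> T}"
      using sr[OF uW] v(1) invM by auto
    also have "\<dots> \<le> \<kappa> * d u" using i1 W(3) by (simp add: mult_left_mono)
    finally have i2: "infdist u L \<le> \<kappa> * d u" .
    obtain u' where u': "u' \<in> L" "infdist u L = dist u u'"
      using infdist_attains_inf[OF Lcl Lne] by metis
    have nd: "norm (u - u') \<le> \<kappa> * d u" using i2 u' by (simp add: dist_norm)
    have "g \<bullet> u = g \<bullet> u' + g \<bullet> (u - u')" by (simp add: inner_diff_right)
    moreover have "g \<bullet> (u - u') \<ge> - (norm g * norm (u - u'))"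
      using Cauchy_Schwarz_ineq2[of g "u - u'"] by linarith
    moreover have "norm u' \<ge> norm u - norm (u - u')" using norm_triangle_ineq2[of u u']
      by (simp add: norm_minus_commute)
    moreover have "\<alpha> * norm u' \<ge> \<alpha> * (norm u - norm (u - u'))"
      using calculation(3) a0 by (simp add: mult_left_mono)
    ultimately have "g \<bullet> u \<ge> \<alpha> * \<rho> - K * norm (u - u')"
      using aL[OF u'(1)] nu by (simp add: K_def algebra_simps)
    moreover have "K * norm (u - u') \<le> K * (\<kappa> * d u)" using nd K0 by (simp add: mult_left_mono)
    ultimately show ?thesis by simp
  qed
  define c where "c = (K * \<kappa>) * (K * \<kappa>) / (\<alpha> * \<rho>) + 1"
  have "(K * \<kappa>) * (K * \<kappa>) / (\<alpha> * \<rho>) \<ge> 0" using a0 rho by simp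
  then have c0: "c > 0" by (simp add: c_def)
  have "c * (\<alpha> * \<rho>) = (K * \<kappa>) * (K * \<kappa>) + \<alpha> * \<rho>"
    using a0 rho unfolding c_def by (simp add: distrib_right)
  then have cA: "(K * \<kappa>) * (K * \<kappa>) \<le> c * (\<alpha> * \<rho>)"
    using a0 rho by (simp add: less_imp_le)
  define F where "F = (\<lambda>u. g \<bullet> u + c / 2 * (d u)^2)"
  have Fsph: "F u > 0" if nu: "norm u = \<rho>" for u
  proof -
    have "F u \<ge> \<alpha> * \<rho> - (K * \<kappa>) * d u + c / 2 * (d u)^2"
      using sphere_est[OF nu] by (simp add: F_def)
    moreover have "\<alpha> * \<rho> - (K * \<kappa>) * d u + c / 2 * (d u)^2 \<ge> \<alpha> * \<rho> / 2"
      by (rule quad_aux[OF c0 cA])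
    moreover have "\<alpha> * \<rho> > 0" using a0 rho by simp
    ultimately show ?thesis by linarith
  qed
  have Fcont: "continuous_on (cball 0 \<rho>) F"
    unfolding F_def d_def by (auto intro!: continuous_intros continuous_on_infdist)
  obtain u0 where u0: "u0 \<in> cball 0 \<rho>" "\<And>u. u \<in> cball 0 \<rho> \<Longrightarrow> F u0 \<le> F u"
    using continuous_attains_inf[OF compact_cball _ Fcont] rho by fastforce
  have F0: "F 0 = 0" using T0 by (simp add: F_def d_def infdist_zero)
  have "F u0 \<le> 0" using u0(2)[of 0] rho F0 by simp
  then have nu0: "norm u0 < \<rho>" using u0(1) Fsph by (metis mem_cball_0 not_less order_antisym_conv)
  obtain v0 where v0: "v0 \<in> T" "infdist (J *v u0) T = dist (J *v u0) v0"
    using infdist_attains_inf[OF Tcl Tne] by metis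
  have near: "dist (J *v u0) v0 \<le> dist (J *v u0) v" if "v \<in> T" for v
    using v0(2) infdist_le[OF that, of "J *v u0"] by simp
  define G where "G = (\<lambda>u. g \<bullet> u + c / 2 * ((J *v u - v0) \<bullet> (J *v u - v0)))"
  have GF: "G u \<ge> F u" for u
  proof -
    have "d u \<le> dist (J *v u) v0" unfolding d_def by (rule infdist_le[OF v0(1)])
    then have "(d u)^2 \<le> (dist (J *v u) v0)^2"
      by (simp add: d_def infdist_nonneg power_mono)
    also have "\<dots> = (J *v u - v0) \<bullet> (J *v u - v0)" by (simp add: dist_norm power2_norm_eq_inner)
    finally show ?thesis using c0 by (simp add: F_def G_def)
  qed
  have GF0: "G u0 = F u0"
    using v0(2) by (simp add: F_def G_def d_def dist_norm power2_norm_eq_inner)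
  have locmin: "eventually (\<lambda>u. G u0 \<le> G u) (at u0)"
  proof -
    have "eventually (\<lambda>u. u \<in> ball u0 (\<rho> - norm u0)) (at u0)"
      using nu0 by (intro eventually_at_in_open') auto
    then show ?thesis
    proof (rule eventually_mono)
      fix u assume "u \<in> ball u0 (\<rho> - norm u0)"
      then have "norm u \<le> \<rho>"
        using norm_triangle_ineq[of u0 "u - u0"] by (simp add: dist_norm norm_minus_commute)
      then show "G u0 \<le> G u" using GF0 GF[of u] u0(2)[of u] by simp
    qed
  qed
  have Gd: "(G has_derivative (\<lambda>h. g \<bullet> h + c / 2 * ((J *v h) \<bullet> (J *v u0 - v0) + (J *v u0 - v0) \<bullet> (J *v h)))) (at u0)"
    unfolding G_def
    by (auto intro!: derivative_eq_intros bounded_linear.has_derivative[OF matrix_vector_mul_bounded_linear])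
  have zero: "g \<bullet> h + c / 2 * ((J *v h) \<bullet> (J *v u0 - v0) + (J *v u0 - v0) \<bullet> (J *v h)) = 0" for h
    using has_derivative_local_min[OF Gd locmin] by meson
  define y where "y = J *v u0 - v0"
  define ws where "ws = c *\<^sub>R y"
  have tr: "y \<bullet> (J *v h) = (transpose J *v y) \<bullet> h" for h
    by (metis dot_lmul_matrix vector_transpose_matrix inner_commute)
  have z2: "g \<bullet> h + c * (y \<bullet> (J *v h)) = 0" for h
  proof -
    have "(J *v h) \<bullet> y = y \<bullet> (J *v h)" by (rule inner_commute)
    then show ?thesis using zero[of h] unfolding y_def[symmetric] by simp
  qed
  have orth: "(g + transpose J *v ws) \<bullet> h = 0" for h
  proof -
    have "(g + transpose J *v ws) \<bullet> h = g \<bullet> h + c * ((transpose J *v y) \<bullet> h)"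
      by (simp add: ws_def matrix_vector_mult_scaleR inner_add_left)
    then show ?thesis using z2[of h] tr[of h] by simp
  qed
  have eq0: "g + transpose J *v ws = 0" using orth[of "g + transpose J *v ws"] by simp
  have "y \<in> polar_cone (tangent_cone T v0)"
    unfolding y_def using proximal_normal[OF v0(1) near] .
  then have "ws \<in> regular_normal_cone T v0"
    unfolding regular_normal_cone_def polar_cone_def ws_def using c0
    by (auto simp: mult_nonneg_nonpos)
  then show ?thesis using v0(1) eq0 unfolding T_def J_def g_def by blast
qed

end
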